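(* Let $n\geq 3$ be an integer and let $\varepsilon>0$ satisfy $\varepsilon<1/n$ if $n$ is odd, and $\varepsilon<2/n$ if $n$ is even. Assume there exists a real orthogonal $n\times n$ matrix $M=(m_{j,k})$ such that for every $j,k=1,\dots,n$, $$\left(\frac{1-\varepsilon}{n}\right)^{1/2}\leq |m_{j,k}|\leq \left(\frac{1+\varepsilon}{n}\right)^{1/2}.$$ Then $n$ is a multiple of $4$ and there exists a Hadamard matrix of order $n$.
   Context: A Hadamard matrix of order $n$ is an $n\times n$ matrix with entries in $\{+1,-1\}$ whose rows are pairwise orthogonal. *)

theory Defs
  imports Complex_Main
begin

(* n x n real matrices represented as functions nat => nat => real, entries indexed by {0..<n} *)

definition orthogonal_mat :: "nat \<Rightarrow> (nat \<Rightarrow> nat \<Rightarrow> real) \<Rightarrow> bool" where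
  "orthogonal_mat n M \<longleftrightarrow>
     (\<forall>j<n. \<forall>k<n. (\<Sum>l<n. M j l * M k l) = (if j = k then 1 else 0))"

definition hadamard_mat :: "nat \<Rightarrow> (nat \<Rightarrow> nat \<Rightarrow> real) \<Rightarrow> bool" where
  "hadamard_mat n H \<longleftrightarrow>
     (\<forall>j<n. \<forall>k<n. H j k = 1 \<or> H j k = -1) \<and>
     (\<forall>j<n. \<forall>k<n. j \<noteq> k \<longrightarrow> (\<Sum>l<n. H j l * H k l) = 0)"

end

theory Submission
  imports Defs
begin

lemma pm1_sum:
  assumes "\<And>k. k < n \<Longrightarrow> f k = 1 \<or> f k = (-1::real)"
  shows "\<exists>m::int. (\<Sum>k<n. f k) = real n - 2 * of_int m"
  using assms
proof (induction n)
  case 0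
  then show ?case by (intro exI[of _ 0]) simp
next
  case (Suc n)
  then obtain m where m: "(\<Sum>k<n. f k) = real n - 2 * of_int m" by auto
  have "f n = 1 \<or> f n = -1" using Suc.prems by auto
  then show ?case
  proof
    assume "f n = 1" then show ?thesis using m by (intro exI[of _ m]) simp
  next
    assume "f n = -1" then show ?thesis using m by (intro exI[of _ "m+1"]) simp
  qed
qed

lemma z4_sum:
  fixes n :: nat
  assumes "\<And>k. k < n \<Longrightarrow> f k = 0 \<or> f k = (4::real)"
  shows "\<exists>m::nat. (\<Sum>k<n. f k) = 4 * real m"
  using assms
proof (induction n)
  case 0
  then show ?case by (intro exI[of _ 0]) simp
next
  case (Suc n)
  then obtain m where m: "(\<Sum>k<n. f k) = 4 * real m" by auto
  have "f n = 0 \<or> f n = 4" using Suc.prems by auto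
  then show ?case
  proof
    assume "f n = 0" then show ?thesis using m by (intro exI[of _ m]) simp
  next
    assume "f n = 4" then show ?thesis using m by (intro exI[of _ "m+1"]) simp
  qed
qed

lemma hadamard_4:
  assumes "hadamard_mat n H" "n \<ge> 3"
  shows "4 dvd n"
proof -
  have pm: "\<And>j k. j < n \<Longrightarrow> k < n \<Longrightarrow> H j k = 1 \<or> H j k = -1"
    and orth: "\<And>j k. j < n \<Longrightarrow> k < n \<Longrightarrow> j \<noteq> k \<Longrightarrow> (\<Sum>l<n. H j l * H k l) = 0"
    using assms(1) unfolding hadamard_mat_def by auto
  have sq: "H 0 l * H 0 l = 1" if "l < n" for l using pm[of 0 l] that assms(2) by auto
  have "(\<Sum>l<n. (H 0 l + H 1 l) * (H 0 l + H 2 l))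
      = (\<Sum>l<n. H 0 l * H 0 l) + (\<Sum>l<n. H 0 l * H 2 l) + (\<Sum>l<n. H 1 l * H 0 l) + (\<Sum>l<n. H 1 l * H 2 l)"
    by (simp add: algebra_simps sum.distrib)
  also have "\<dots> = real n"
    using orth[of 0 2] orth[of 1 0] orth[of 1 2] assms(2) sq by simp
  finally have e: "(\<Sum>l<n. (H 0 l + H 1 l) * (H 0 l + H 2 l)) = real n" .
  have "\<exists>m::nat. (\<Sum>l<n. (H 0 l + H 1 l) * (H 0 l + H 2 l)) = 4 * real m"
  proof (rule z4_sum)
    fix k assume "k < n"
    then have "H 0 k = 1 \<or> H 0 k = -1" "H 1 k = 1 \<or> H 1 k = -1" "H 2 k = 1 \<or> H 2 k = -1"
      using pm assms(2) by auto
    then show "(H 0 k + H 1 k) * (H 0 k + H 2 k) = 0 \<or> (H 0 k + H 1 k) * (H 0 k + H 2 k) = 4"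
      by auto
  qed
  then obtain m :: nat where "real n = 4 * real m" using e by auto
  then have "n = 4 * m" by linarith
  then show ?thesis by simp
qed

theorem proposition2p1:
  fixes n :: nat and \<epsilon> :: real and M :: "nat \<Rightarrow> nat \<Rightarrow> real"
  assumes "n \<ge> 3"
    and "\<epsilon> > 0"
    and "odd n \<Longrightarrow> \<epsilon> < 1 / real n"
    and "even n \<Longrightarrow> \<epsilon> < 2 / real n"
    and "orthogonal_mat n M"
    and "\<And>j k. j < n \<Longrightarrow> k < n \<Longrightarrow>
           sqrt ((1 - \<epsilon>) / real n) \<le> \<bar>M j k\<bar> \<and> \<bar>M j k\<bar> \<le> sqrt ((1 + \<epsilon>) / real n)"
  shows "4 dvd n \<and> (\<exists>H. hadamard_mat n H)"
proof -
  have npos: "real n > 0" using assms(1) by simp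
  have eps1: "\<epsilon> < 1"
  proof (cases "odd n")
    case True
    have "1 / real n \<le> 1" using assms(1) by simp
    then show ?thesis using assms(3)[OF True] by linarith
  next
    case False
    have "2 / real n \<le> 1" using assms(1) by (simp add: field_simps)
    then show ?thesis using assms(4) False by linarith
  qed
  define H where "H = (\<lambda>j k. sgn (M j k))"
  have lo: "sqrt ((1 - \<epsilon>) / real n) > 0" using eps1 npos by simp
  have nz: "M j k \<noteq> 0" if "j < n" "k < n" for j k
    using assms(6)[OF that] lo by auto
  have Hpm: "H j k = 1 \<or> H j k = -1" if "j < n" "k < n" for j k
    using nz[OF that] unfolding H_def by (auto simp: sgn_if)
  have key: "\<exists>m::int. (\<Sum>l<n. H j l * H k l) = real n - 2 * of_int m
      \<and> \<bar>real n - 2 * of_int m\<bar> \<le> \<epsilon> * real n"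
    if jk: "j < n" "k < n" "j \<noteq> k" for j k
  proof -
    define t where "t = (\<lambda>l. H j l * H k l)"
    define p where "p = (\<lambda>l. \<bar>M j l\<bar> * \<bar>M k l\<bar>)"
    have Mtp: "M j l * M k l = t l * p l" for l
      unfolding t_def p_def H_def
      by (metis (no_types, lifting) mult.assoc mult.left_commute sgn_mult_abs)
    have s0: "(\<Sum>l<n. t l * p l) = 0"
      using assms(5) jk unfolding orthogonal_mat_def by (simp add: Mtp[symmetric])
    have pb: "\<bar>p l - 1 / real n\<bar> \<le> \<epsilon> / real n" if "l < n" for l
    proof -
      have a: "sqrt ((1 - \<epsilon>) / real n) \<le> \<bar>M j l\<bar>" "\<bar>M j l\<bar> \<le> sqrt ((1 + \<epsilon>) / real n)"
        "sqrt ((1 - \<epsilon>) / real n) \<le> \<bar>M k l\<bar>" "\<bar>M k l\<bar> \<le> sqrt ((1 + \<epsilon>) / real n)"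
        using assms(6) jk that by auto
      have "sqrt ((1 - \<epsilon>) / real n) * sqrt ((1 - \<epsilon>) / real n) \<le> p l"
        unfolding p_def using a eps1 npos by (intro mult_mono) auto
      moreover have "sqrt ((1 - \<epsilon>) / real n) * sqrt ((1 - \<epsilon>) / real n) = (1 - \<epsilon>) / real n"
        using eps1 npos by simp
      moreover have "p l \<le> sqrt ((1 + \<epsilon>) / real n) * sqrt ((1 + \<epsilon>) / real n)"
        unfolding p_def using a assms(2) npos by (intro mult_mono) auto
      moreover have "sqrt ((1 + \<epsilon>) / real n) * sqrt ((1 + \<epsilon>) / real n) = (1 + \<epsilon>) / real n"
        using assms(2) npos by simp
      ultimately show ?thesis by (simp add: abs_le_iff diff_divide_distrib add_divide_distrib)
    qed
    obtain m :: int where m: "(\<Sum>l<n. t l) = real n - 2 * of_int m"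
    proof -
      have "t l = 1 \<or> t l = -1" if "l < n" for l
        using Hpm[of j l] Hpm[of k l] jk that unfolding t_def by auto
      then show ?thesis using pm1_sum[of n t] that by blast
    qed
    have "(\<Sum>l<n. t l) / real n = (\<Sum>l<n. t l * (1 / real n - p l))"
      using s0 by (simp add: algebra_simps sum_subtractf sum_divide_distrib)
    also have "\<bar>\<dots>\<bar> \<le> (\<Sum>l<n. \<bar>t l * (1 / real n - p l)\<bar>)" by (rule sum_abs)
    also have "\<dots> \<le> (\<Sum>l<n. \<epsilon> / real n)"
    proof (rule sum_mono)
      fix l assume "l \<in> {..<n}"
      then have "l < n" by simp
      then have "\<bar>t l\<bar> = 1" "\<bar>1 / real n - p l\<bar> \<le> \<epsilon> / real n"
        using Hpm[of j l] Hpm[of k l] jk pb[of l] unfolding t_def by (auto simp: abs_minus_commute)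
      then show "\<bar>t l * (1 / real n - p l)\<bar> \<le> \<epsilon> / real n" by (simp add: abs_mult)
    qed
    also have "\<dots> = \<epsilon>" using npos by simp
    finally have "\<bar>(\<Sum>l<n. t l)\<bar> / real n \<le> \<epsilon>" by simp
    then have "\<bar>(\<Sum>l<n. t l)\<bar> \<le> \<epsilon> * real n" using npos by (simp add: field_simps)
    then show ?thesis using m unfolding t_def by auto
  qed
  have evn: "even n"
  proof (rule ccontr)
    assume od: "odd n"
    obtain m :: int where "\<bar>real n - 2 * of_int m\<bar> \<le> \<epsilon> * real n"
      using key[of 0 1] assms(1) by auto
    moreover have "\<epsilon> * real n < 1" using assms(3)[OF od] npos by (simp add: field_simps)
    ultimately have "\<bar>real n - 2 * of_int m\<bar> < 1" by linarith
    then have "\<bar>int n - 2 * m\<bar> < 1" by linarith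
    then have "int n = 2 * m" by linarith
    then show False using od by (metis even_of_nat dvd_triv_left)
  qed
  have had: "hadamard_mat n H"
    unfolding hadamard_mat_def
  proof (intro conjI allI impI)
    fix j k assume "j < n" "k < n" then show "H j k = 1 \<or> H j k = -1" by (rule Hpm)
  next
    fix j k assume jk: "j < n" "k < n" "j \<noteq> k"
    obtain m :: int where m: "(\<Sum>l<n. H j l * H k l) = real n - 2 * of_int m"
      "\<bar>real n - 2 * of_int m\<bar> \<le> \<epsilon> * real n" using key[OF jk] by auto
    have "\<epsilon> * real n < 2" using assms(4)[OF evn] npos by (simp add: field_simps)
    then have "\<bar>int n - 2 * m\<bar> < 2" using m(2) by linarith
    moreover obtain q where "n = 2 * q" using evn by auto
    ultimately have a: "\<bar>2 * (int q - m)\<bar> < 2" by (simp add: algebra_simps)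
    have "\<bar>int q - m\<bar> < 1" using a by (simp only: abs_mult) simp
    then have "int q - m = 0" by linarith
    then have "int n - 2 * m = 0" using \<open>n = 2 * q\<close> by simp
    then show "(\<Sum>l<n. H j l * H k l) = 0" using m(1) by linarith
  qed
  show ?thesis using had hadamard_4 assms(1) by blast
qed

end
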